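(* Let $X$ be a Hausdorff zero-dimensional topological space. Then $\mathrm{Homeo}(X)$ is fully transitive.
   Context: A space is zero-dimensional if its topology has a basis of clopen sets. Two points $x,y\in X$ are similar if there are neighbourhoods $U_x\ni x$, $U_y\ni y$ and a homeomorphism $h\colon U_x\to U_y$ with $h(x)=y$. A group $G$ of homeomorphisms of $X$ is fully transitive if for every natural number $k$ and all $k$-tuples of pairwise distinct points $(x_1,\dots,x_k)$, $(y_1,\dots,y_k)$ with $x_i$ similar to $y_i$ for each $i$, there is $g\in G$ with $g(x_i)=y_i$ for all $i$. *)

theory Defs
  imports "HOL-Analysis.Analysis"
begin

definition zero_dimensional :: "'a topology \<Rightarrow> bool" where
  "zero_dimensional X \<longleftrightarrow>
     (\<exists>\<B>. (\<forall>B\<in>\<B>. (openin X B \<and> closedin X B)) \<and> openin X = arbitrary union_of (\<lambda>U. U \<in> \<B>))"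

definition similar_points :: "'a topology \<Rightarrow> 'a \<Rightarrow> 'a \<Rightarrow> bool" where
  "similar_points X x y \<longleftrightarrow>
     (\<exists>U V h. openin X U \<and> x \<in> U \<and> openin X V \<and> y \<in> V \<and>
              homeomorphic_map (subtopology X U) (subtopology X V) h \<and> h x = y)"

definition Homeo :: "'a topology \<Rightarrow> ('a \<Rightarrow> 'a) set" where
  "Homeo X = {g. homeomorphic_map X X g}"

definition fully_transitive :: "'a topology \<Rightarrow> ('a \<Rightarrow> 'a) set \<Rightarrow> bool" where
  "fully_transitive X G \<longleftrightarrow>
     (\<forall>(k::nat) (x::nat \<Rightarrow> 'a) y.
        (\<forall>i<k. x i \<in> topspace X \<and> y i \<in> topspace X) \<and>
        inj_on x {..<k} \<and> inj_on y {..<k} \<and>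
        (\<forall>i<k. similar_points X (x i) (y i))
        \<longrightarrow> (\<exists>g\<in>G. \<forall>i<k. g (x i) = y i))"

end

theory Submission
  imports Defs
begin

lemma zd_clopen_nbhd:
  assumes "zero_dimensional X" "openin X S" "p \<in> S"
  shows "\<exists>C. openin X C \<and> closedin X C \<and> p \<in> C \<and> C \<subseteq> S"
proof -
  obtain \<B> where B: "\<forall>B\<in>\<B>. openin X B \<and> closedin X B"
    and eq: "openin X = arbitrary union_of (\<lambda>U. U \<in> \<B>)"
    using assms(1) unfolding zero_dimensional_def by blast
  have "(arbitrary union_of (\<lambda>U. U \<in> \<B>)) S" using assms(2) eq by metis
  then obtain \<U> where "\<U> \<subseteq> \<B>" "\<Union>\<U> = S" unfolding union_of_def by auto
  then show ?thesis using B assms(3) by blast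
qed

lemma similar_transport:
  assumes "similar_points X a b" "homeomorphic_map X X g" "a \<in> topspace X"
  shows "similar_points X (g a) b"
proof -
  obtain U V h where UV: "openin X U" "a \<in> U" "openin X V" "b \<in> V"
    and h: "homeomorphic_map (subtopology X U) (subtopology X V) h" "h a = b"
    using assms(1) unfolding similar_points_def by blast
  obtain g' where gg: "homeomorphic_maps X X g g'" using assms(2) homeomorphic_map_maps by blast
  have Usub: "U \<subseteq> topspace X" using UV openin_subset by blast
  have "g ` (topspace X \<inter> U) = topspace X \<inter> g ` U"
    using gg Usub unfolding homeomorphic_maps_def continuous_map_def by auto
  then have "homeomorphic_maps (subtopology X U) (subtopology X (g ` U)) g g'"
    using homeomorphic_maps_subtopologies gg by blast
  then have m1: "homeomorphic_maps (subtopology X (g ` U)) (subtopology X U) g' g"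
    using homeomorphic_maps_sym by blast
  obtain h' where "homeomorphic_maps (subtopology X U) (subtopology X V) h h'"
    using h homeomorphic_map_maps by blast
  then have "homeomorphic_maps (subtopology X (g ` U)) (subtopology X V) (h \<circ> g') (g \<circ> h')"
    using m1 homeomorphic_maps_compose by blast
  then have hm: "homeomorphic_map (subtopology X (g ` U)) (subtopology X V) (h \<circ> g')"
    using homeomorphic_maps_imp_map by blast
  have og: "openin X (g ` U)"
    using assms(2) homeomorphic_imp_open_map UV(1) open_map_def by blast
  have "g' (g a) = a" using gg assms(3) unfolding homeomorphic_maps_def by auto
  then show ?thesis unfolding similar_points_def
    using og hm UV h(2) by (intro exI[of _ "g ` U"] exI[of _ V] exI[of _ "h \<circ> g'"]) auto
qed

lemma swap_lemma:
  assumes H: "Hausdorff_space X" and Z: "zero_dimensional X"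
    and sim: "similar_points X a b" and ab: "a \<noteq> b" and fin: "finite F"
    and aF: "a \<notin> F" and bF: "b \<notin> F"
  shows "\<exists>f\<in>Homeo X. f a = b \<and> (\<forall>z\<in>F. f z = z)"
proof -
  obtain U V h where UV: "openin X U" "a \<in> U" "openin X V" "b \<in> V"
    and hm: "homeomorphic_map (subtopology X U) (subtopology X V) h" and hab: "h a = b"
    using sim unfolding similar_points_def by blast
  obtain h' where hh: "homeomorphic_maps (subtopology X U) (subtopology X V) h h'"
    using hm homeomorphic_map_maps by blast
  have Usub: "U \<subseteq> topspace X" and Vsub: "V \<subseteq> topspace X" using UV openin_subset by blast+
  have tU: "topspace (subtopology X U) = U" and tV: "topspace (subtopology X V) = V"
    using Usub Vsub by auto
  have hc: "continuous_map (subtopology X U) (subtopology X V) h"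
    and h'c: "continuous_map (subtopology X V) (subtopology X U) h'"
    and hinv: "\<And>x. x \<in> U \<Longrightarrow> h' (h x) = x" and h'inv: "\<And>y. y \<in> V \<Longrightarrow> h (h' y) = y"
    using hh tU tV unfolding homeomorphic_maps_def by auto
  have hUV: "\<And>x. x \<in> U \<Longrightarrow> h x \<in> V" using hc tU tV unfolding continuous_map_def by auto
  have h'VU: "\<And>y. y \<in> V \<Longrightarrow> h' y \<in> U" using h'c tU tV unfolding continuous_map_def by auto
  have aX: "a \<in> topspace X" and bX: "b \<in> topspace X" using UV Usub Vsub by auto
  obtain A B where AB: "openin X A" "openin X B" "a \<in> A" "b \<in> B" "disjnt A B"
    using H aX bX ab unfolding Hausdorff_space_def by blast
  have "closedin X (F \<inter> topspace X)"
    using Hausdorff_imp_t1_space[OF H] fin unfolding t1_space_closedin_finite by auto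
  then have oN: "openin X (topspace X - F)"
    by (metis Diff_Int2 Diff_Int_distrib2 inf.idem openin_diff openin_topspace closedin_def)
  have "openin X (B \<inter> V \<inter> (topspace X - F))" using AB UV oN by blast
  then obtain E where E: "openin X E" "closedin X E" "b \<in> E" "E \<subseteq> B \<inter> V \<inter> (topspace X - F)"
    using zd_clopen_nbhd[OF Z] bX bF AB UV by (metis Diff_iff IntI)
  have "openin (subtopology X V) E" using E UV(3) openin_open_subtopology by blast
  then have "openin (subtopology X U) {x \<in> U. h x \<in> E}"
    using openin_continuous_map_preimage[OF hc] unfolding tU by blast
  then have oW: "openin X {x \<in> U. h x \<in> E}" using UV(1) openin_open_subtopology by blast
  have "openin X ({x \<in> U. h x \<in> E} \<inter> A \<inter> (topspace X - F))" using oW AB oN by blast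
  then obtain C where C: "openin X C" "closedin X C" "a \<in> C"
      "C \<subseteq> {x \<in> U. h x \<in> E} \<inter> A \<inter> (topspace X - F)"
    using zd_clopen_nbhd[OF Z] aX aF AB UV hab E by (metis (mono_tags, lifting) Diff_iff IntI mem_Collect_eq)
  define D where "D = h ` C"
  have CU: "C \<subseteq> U" using C by blast
  have DE: "D \<subseteq> E" using C D_def by blast
  have oCU: "openin (subtopology X U) C" using openin_open_subtopology[OF UV(1)] C CU by blast
  have "closedin (subtopology X U) C" using closedin_subset_topspace[OF C(2) CU] .
  then have "closedin (subtopology X V) D"
    using homeomorphic_imp_closed_map[OF hm] unfolding closed_map_def D_def by simp
  then obtain K where K: "closedin X K" "D = K \<inter> V" unfolding closedin_subtopology by auto
  have "D = K \<inter> E" using K DE E by blast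
  then have cD: "closedin X D" using closedin_Int[OF K(1) E(2)] by simp
  have "openin (subtopology X V) D"
    using homeomorphic_imp_open_map[OF hm] oCU unfolding open_map_def D_def by simp
  then have oD: "openin X D" using openin_open_subtopology[OF UV(3)] by blast
  have CD: "C \<inter> D = {}" using C DE E AB unfolding disjnt_def by blast
  have CF: "C \<inter> F = {}" and DF: "D \<inter> F = {}" using C DE E by blast+
  have DV: "D \<subseteq> V" using DE E by blast
  have h'D: "\<And>y. y \<in> D \<Longrightarrow> h' y \<in> C" using hinv CU D_def by auto
  define f where "f z = (if z \<in> C then h z else if z \<in> D then h' z else z)" for z
  have ff: "f (f z) = z" if "z \<in> topspace X" for z
  proof -
    consider "z \<in> C" | "z \<in> D" | "z \<notin> C" "z \<notin> D" by blast
    then show ?thesis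
    proof cases
      case 1 then have "h z \<in> D" "h z \<notin> C" using D_def CD by auto
      then show ?thesis using 1 hinv CU f_def by auto
    next
      case 2 then have "z \<notin> C" "h' z \<in> C" using CD h'D by auto
      then show ?thesis using 2 h'inv DV f_def by auto
    qed (auto simp: f_def)
  qed
  have cf: "continuous_map X X f"
  proof (rule pasting_lemma[where I="{0::nat,1,2}" and T="\<lambda>i. if i = 0 then C else if i = 1 then D else topspace X - (C \<union> D)" and f="\<lambda>i. f"])
    show "openin X (if i = 0 then C else if i = 1 then D else topspace X - (C \<union> D))" if "i \<in> {0::nat,1,2}" for i
      using C oD cD by auto
    show "\<exists>j. j \<in> {0::nat,1,2} \<and> x \<in> (if j = 0 then C else if j = 1 then D else topspace X - (C \<union> D)) \<and> f x = f x"
      if "x \<in> topspace X" for x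
    proof (cases "x \<in> C")
      case True then show ?thesis by (intro exI[of _ 0]) simp
    next
      case False
      show ?thesis
      proof (cases "x \<in> D")
        case True then show ?thesis by (intro exI[of _ 1]) simp
      next
        case nD: False
        have "x \<in> topspace X - (C \<union> D)" using False nD that by blast
        then show ?thesis by (intro exI[of _ 2]) simp
      qed
    qed
    show "f x = f x" for x by simp
    fix i :: nat assume i: "i \<in> {0,1,2}"
    have c1: "continuous_map (subtopology X C) X f"
    proof -
      have "continuous_map (subtopology X C) (subtopology X V) h"
        using continuous_map_from_subtopology_mono[OF hc CU] by (simp add: subtopology_subtopology inf.absorb_iff2[THEN iffD1, OF CU] Int_absorb1[OF CU])
      then have "continuous_map (subtopology X C) X h" using continuous_map_in_subtopology by blast
      then show ?thesis by (rule continuous_map_eq) (auto simp: f_def)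
    qed
    have c2: "continuous_map (subtopology X D) X f"
    proof -
      have "continuous_map (subtopology X D) (subtopology X U) h'"
        using continuous_map_from_subtopology_mono[OF h'c DV] by (simp add: subtopology_subtopology Int_absorb1[OF DV])
      then have "continuous_map (subtopology X D) X h'" using continuous_map_in_subtopology by blast
      then show ?thesis by (rule continuous_map_eq) (use CD in \<open>auto simp: f_def\<close>)
    qed
    have c3: "continuous_map (subtopology X (topspace X - (C \<union> D))) X f"
    proof -
      have "continuous_map (subtopology X (topspace X - (C \<union> D))) X id"
        by (simp add: continuous_map_from_subtopology)
      then show ?thesis by (rule continuous_map_eq) (auto simp: f_def)
    qed
    show "continuous_map (subtopology X (if i = 0 then C else if i = 1 then D else topspace X - (C \<union> D))) X f"
      using c1 c2 c3 by auto
  qed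
  have "homeomorphic_maps X X f f" unfolding homeomorphic_maps_def using cf ff by auto
  then have "f \<in> Homeo X" unfolding Homeo_def using homeomorphic_maps_imp_map by blast
  moreover have "f a = b" using C hab f_def by auto
  moreover have "\<forall>z\<in>F. f z = z" using CF DF f_def by auto
  ultimately show ?thesis by blast
qed

theorem theorem20:
  fixes X :: "'a topology"
  assumes "Hausdorff_space X" and "zero_dimensional X"
  shows "fully_transitive X (Homeo X)"
  unfolding fully_transitive_def
proof (intro allI impI)
  fix k :: nat and x y :: "nat \<Rightarrow> 'a"
  assume hyp: "(\<forall>i<k. x i \<in> topspace X \<and> y i \<in> topspace X) \<and>
        inj_on x {..<k} \<and> inj_on y {..<k} \<and> (\<forall>i<k. similar_points X (x i) (y i))"
  have "i \<le> k \<Longrightarrow> \<exists>g\<in>Homeo X. \<forall>j<i. g (x j) = y j" for i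
  proof (induction i)
    case 0
    have "id \<in> Homeo X" unfolding Homeo_def by simp
    then show ?case by blast
  next
    case (Suc i)
    then have ik: "i < k" by simp
    then obtain g where g: "g \<in> Homeo X" "\<forall>j<i. g (x j) = y j" using Suc by auto
    have gh: "homeomorphic_map X X g" using g(1) unfolding Homeo_def by simp
    have xi: "x i \<in> topspace X" using hyp ik by blast
    have sim: "similar_points X (g (x i)) (y i)"
      using similar_transport[OF _ gh xi] hyp ik by blast
    show ?case
    proof (cases "g (x i) = y i")
      case True
      then show ?thesis using g less_Suc_eq by auto
    next
      case False
      have injg: "inj_on g (topspace X)" using gh homeomorphic_map_def by blast
      have aF: "g (x i) \<notin> y ` {..<i}"
      proof
        assume "g (x i) \<in> y ` {..<i}"
        then obtain j where j: "j < i" "g (x i) = y j" by auto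
        then have "g (x i) = g (x j)" using g by simp
        moreover have "x j \<in> topspace X" using hyp j ik by auto
        ultimately have "x i = x j" using injg xi inj_onD by metis
        then show False using hyp j ik inj_onD[of x "{..<k}" i j] by auto
      qed
      have bF: "y i \<notin> y ` {..<i}"
      proof
        assume "y i \<in> y ` {..<i}"
        then obtain j where j: "j < i" "y i = y j" by auto
        then show False using hyp j ik inj_onD[of y "{..<k}" i j] by auto
      qed
      obtain f where f: "f \<in> Homeo X" "f (g (x i)) = y i" "\<forall>z\<in>y ` {..<i}. f z = z"
        using swap_lemma[OF assms sim False _ aF bF] by blast
      have "f \<circ> g \<in> Homeo X" using f(1) gh homeomorphic_map_compose unfolding Homeo_def by blast
      moreover have "\<forall>j<Suc i. (f \<circ> g) (x j) = y j"
        using f g less_Suc_eq by auto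
      ultimately show ?thesis by blast
    qed
  qed
  then show "\<exists>g\<in>Homeo X. \<forall>i<k. g (x i) = y i" by blast
qed

end
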